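(* Let $\beta>-1$, $z>0$, and let $p_n(x;z)$ be the orthonormal polynomials with respect to the generalized Charlier weight $\omega(k)=z^k/((\beta+1)_k\,k!)$ on $\mathbb{N}$, with recurrence $xp_n=a_{n+1}p_{n+1}+b_np_n+a_np_{n-1}$, $p_{-1}=0$, $p_0=1$ (normalized). Then $$a_n^2(z)=\Big(z\frac{d}{dz}\Big)^2\ln\Delta_n(z;\beta),\qquad b_n(z)=z\frac{d}{dz}\ln\frac{\Delta_{n+1}(z;\beta)}{\Delta_n(z;\beta)},$$ where $\Delta_n(z;\beta)=\big[\Gamma(\beta+1)\big]^n\,\mathcal{W}_n\big(z^{-\beta/2}I_\beta(2\sqrt z)\big)$.
   Context: $(\beta+1)_k$ is the Pochhammer symbol; $I_\beta$ the modified Bessel function; $\delta_z= z\,\frac{d}{dz}$; $\mathcal{W}_n(\psi)=\det[\delta_z^{\,j+k}\psi]_{j,k=0}^{n-1}$, $\mathcal{W}_0=1$. *)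

theory Defs
  imports "HOL-Analysis.Analysis" "Jordan_Normal_Form.Determinant"
begin

definition besselI :: "real \<Rightarrow> real \<Rightarrow> real" where
  "besselI \<beta> x = (\<Sum>k. (x / 2) powr (2 * real k + \<beta>) / (fact k * Gamma (real k + \<beta> + 1)))"

definition euler_op :: "(real \<Rightarrow> real) \<Rightarrow> (real \<Rightarrow> real)" where
  "euler_op f = (\<lambda>z. z * deriv f z)"

definition Wdet :: "nat \<Rightarrow> (real \<Rightarrow> real) \<Rightarrow> real \<Rightarrow> real" where
  "Wdet n \<psi> z = det (mat n n (\<lambda>(j, k). (euler_op ^^ (j + k)) \<psi> z))"

definition charlier_weight :: "real \<Rightarrow> real \<Rightarrow> nat \<Rightarrow> real" where
  "charlier_weight \<beta> z k = z ^ k / (pochhammer (\<beta> + 1) k * fact k)"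

definition Delta :: "nat \<Rightarrow> real \<Rightarrow> real \<Rightarrow> real" where
  "Delta n \<beta> z = Gamma (\<beta> + 1) ^ n *
     Wdet n (\<lambda>w. w powr (-\<beta> / 2) * besselI \<beta> (2 * sqrt w)) z"

end

theory Submission
  imports Defs
begin


definition cw :: "real \<Rightarrow> nat \<Rightarrow> real" where
  "cw \<beta> k = 1 / (pochhammer (\<beta> + 1) k * fact k)"

lemma cw_pos: "\<beta> > -1 \<Longrightarrow> cw \<beta> k > 0"
  unfolding cw_def by (intro divide_pos_pos mult_pos_pos pochhammer_pos) auto

lemma cw_Suc: "cw \<beta> (Suc k) = cw \<beta> k / ((\<beta> + 1 + real k) * (real k + 1))"
  unfolding cw_def by (simp add: pochhammer_Suc field_simps)

lemma charlier_weight_cw: "charlier_weight \<beta> z k = cw \<beta> k * z ^ k"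
  unfolding charlier_weight_def cw_def by simp
definition mu :: "real \<Rightarrow> nat \<Rightarrow> real \<Rightarrow> real" where
  "mu \<beta> j z = (\<Sum>k. (real k ^ j * cw \<beta> k) * z ^ k)"

lemma mu_summable:
  assumes b: "\<beta> > -1"
  shows "summable (\<lambda>k. (real k ^ j * cw \<beta> k) * y ^ k)"
proof (rule summable_ratio_test[where c = "1/2" and N = "nat \<lceil>2 ^ (j+1) * \<bar>y\<bar>\<rceil> + 1"])
  fix n assume n: "nat \<lceil>2 ^ (j+1) * \<bar>y\<bar>\<rceil> + 1 \<le> n"
  hence n1: "real n \<ge> 1" and n2: "real n \<ge> 2 ^ (j+1) * \<bar>y\<bar>" by linarith+
  have cp: "cw \<beta> n > 0" using cw_pos[OF b] .
  have pj: "(real n + 1) ^ j \<le> 2 ^ j * real n ^ j"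
  proof -
    have "(real n + 1) ^ j \<le> (2 * real n) ^ j" by (rule power_mono) (use n1 in auto)
    thus ?thesis by (simp add: power_mult_distrib)
  qed
  have den0: "(\<beta> + 1 + real n) * (real n + 1) \<ge> real n * (real n + 1)"
    by (rule mult_right_mono) (use b in auto)
  have "real n * (real n + 1) \<ge> real n" using n1 by (simp add: algebra_simps)
  with den0 have den: "(\<beta> + 1 + real n) * (real n + 1) \<ge> real n" by linarith
  have "norm ((real (Suc n) ^ j * cw \<beta> (Suc n)) * y ^ Suc n)
      = (real n + 1) ^ j * \<bar>y\<bar> * (cw \<beta> n * \<bar>y\<bar> ^ n) / ((\<beta> + 1 + real n) * (real n + 1))"
  proof -
    have cs: "cw \<beta> (Suc n) > 0" using cw_pos[OF b] .
    have "norm ((real (Suc n) ^ j * cw \<beta> (Suc n)) * y ^ Suc n) = (real n + 1) ^ j * cw \<beta> (Suc n) * (\<bar>y\<bar> * \<bar>y\<bar> ^ n)"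
      using cs by (simp add: abs_mult power_abs add.commute)
    also have "\<dots> = (real n + 1) ^ j * \<bar>y\<bar> * (cw \<beta> n * \<bar>y\<bar> ^ n) / ((\<beta> + 1 + real n) * (real n + 1))"
      unfolding cw_Suc by simp
    finally show ?thesis .
  qed
  also have "\<dots> \<le> 2 ^ j * real n ^ j * \<bar>y\<bar> * (cw \<beta> n * \<bar>y\<bar> ^ n) / real n"
  proof (rule frac_le)
    show "0 \<le> 2 ^ j * real n ^ j * \<bar>y\<bar> * (cw \<beta> n * \<bar>y\<bar> ^ n)" using cp by simp
    show "(real n + 1) ^ j * \<bar>y\<bar> * (cw \<beta> n * \<bar>y\<bar> ^ n) \<le> 2 ^ j * real n ^ j * \<bar>y\<bar> * (cw \<beta> n * \<bar>y\<bar> ^ n)"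
      using pj cp by (intro mult_right_mono) auto
  qed (use n1 den in auto)
  also have "\<dots> = (2 ^ j * \<bar>y\<bar> / real n) * (real n ^ j * (cw \<beta> n * \<bar>y\<bar> ^ n))"
    by simp
  also have "\<dots> \<le> (1/2) * (real n ^ j * (cw \<beta> n * \<bar>y\<bar> ^ n))"
  proof (rule mult_right_mono)
    show "2 ^ j * \<bar>y\<bar> / real n \<le> 1/2" using n1 n2 by (simp add: field_simps)
  qed (use cp in auto)
  also have "\<dots> = (1/2) * norm ((real n ^ j * cw \<beta> n) * y ^ n)"
    using cp by (simp add: abs_mult power_abs)
  finally show "norm ((real (Suc n) ^ j * cw \<beta> (Suc n)) * y ^ Suc n) \<le> (1/2) * norm ((real n ^ j * cw \<beta> n) * y ^ n)" .
qed simp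

lemma mu_sums: "\<beta> > -1 \<Longrightarrow> (\<lambda>k. (real k ^ j * cw \<beta> k) * z ^ k) sums mu \<beta> j z"
  unfolding mu_def using mu_summable by (rule summable_sums)

lemma mu_deriv:
  assumes b: "\<beta> > -1" and z: "z > 0"
  shows "(mu \<beta> j has_real_derivative mu \<beta> (Suc j) z / z) (at z)"
proof -
  let ?c = "\<lambda>k. real k ^ j * cw \<beta> k"
  have d: "((\<lambda>x. \<Sum>k. ?c k * x^k) has_real_derivative (\<Sum>k. diffs ?c k * z^k)) (at z)"
    by (rule termdiffs_strong_converges_everywhere) (use mu_summable[OF b] in auto)
  have s1: "(\<lambda>k. diffs ?c k * z ^ k) sums (\<Sum>k. diffs ?c k * z^k)"
    by (rule summable_sums, rule termdiff_converges_all) (use mu_summable[OF b] in auto)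
  have "(\<lambda>k. z * (diffs ?c k * z ^ k)) sums (z * (\<Sum>k. diffs ?c k * z^k))"
    by (rule sums_mult[OF s1])
  moreover have "(\<lambda>k. z * (diffs ?c k * z ^ k)) = (\<lambda>k. (real (Suc k) ^ Suc j * cw \<beta> (Suc k)) * z ^ Suc k)"
    by (auto simp: diffs_def algebra_simps)
  ultimately have "(\<lambda>k. (real (Suc k) ^ Suc j * cw \<beta> (Suc k)) * z ^ Suc k) sums (z * (\<Sum>k. diffs ?c k * z^k))"
    by simp
  hence "(\<lambda>k. (real k ^ Suc j * cw \<beta> k) * z ^ k) sums (z * (\<Sum>k. diffs ?c k * z^k))"
    using sums_Suc_iff[of "\<lambda>k. (real k ^ Suc j * cw \<beta> k) * z ^ k"] by simp
  hence "mu \<beta> (Suc j) z = z * (\<Sum>k. diffs ?c k * z^k)"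
    using mu_sums[OF b] sums_unique2 by blast
  hence "(\<Sum>k. diffs ?c k * z^k) = mu \<beta> (Suc j) z / z" using z by simp
  with d show ?thesis unfolding mu_def[abs_def] by simp
qed



lemma psi_mu:
  assumes b: "\<beta> > -1" and w: "w > 0"
  shows "w powr (-\<beta> / 2) * besselI \<beta> (2 * sqrt w) = mu \<beta> 0 w / Gamma (\<beta> + 1)"
proof -
  have G: "Gamma (\<beta> + 1) > 0" using b by simp
  have nz: "\<beta> + 1 \<notin> \<int>\<^sub>\<le>\<^sub>0" using b by auto
  have tm: "(2 * sqrt w / 2) powr (2 * real k + \<beta>) / (fact k * Gamma (real k + \<beta> + 1))
      = w powr (\<beta> / 2) / Gamma (\<beta> + 1) * ((real k ^ 0 * cw \<beta> k) * w ^ k)" for k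
  proof -
    have "(2 * sqrt w / 2) powr (2 * real k + \<beta>) = (w powr (1/2)) powr (2 * real k + \<beta>)"
      using w by (simp add: powr_half_sqrt)
    also have "\<dots> = w powr (real k + \<beta> / 2)" by (simp add: powr_powr algebra_simps)
    also have "\<dots> = w ^ k * w powr (\<beta> / 2)" using w by (simp add: powr_add powr_realpow)
    finally have 1: "(2 * sqrt w / 2) powr (2 * real k + \<beta>) = w ^ k * w powr (\<beta> / 2)" .
    have "pochhammer (\<beta> + 1) k = Gamma (\<beta> + 1 + real k) / Gamma (\<beta> + 1)"
      using pochhammer_Gamma[OF nz] by simp
    hence 2: "Gamma (real k + \<beta> + 1) = pochhammer (\<beta> + 1) k * Gamma (\<beta> + 1)"
      using G by (simp add: field_simps add_ac)
    have pp: "pochhammer (\<beta> + 1) k > 0" using b by (intro pochhammer_pos) auto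
    show ?thesis unfolding 1 2 cw_def using pp G by (simp add: field_simps)
  qed
  have "besselI \<beta> (2 * sqrt w) = (\<Sum>k. w powr (\<beta> / 2) / Gamma (\<beta> + 1) * ((real k ^ 0 * cw \<beta> k) * w ^ k))"
    unfolding besselI_def tm ..
  also have "\<dots> = w powr (\<beta> / 2) / Gamma (\<beta> + 1) * mu \<beta> 0 w"
    unfolding mu_def by (rule suminf_mult[OF mu_summable[OF b]])
  finally have "besselI \<beta> (2 * sqrt w) = w powr (\<beta> / 2) / Gamma (\<beta> + 1) * mu \<beta> 0 w" .
  moreover have "w powr (-\<beta> / 2) * w powr (\<beta> / 2) = 1" using w by (simp add: powr_add[symmetric])
  ultimately show ?thesis by (simp add: field_simps)
qed

lemma euler_mu:
  assumes b: "\<beta> > -1"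
  shows "z > 0 \<Longrightarrow> (euler_op ^^ j) (\<lambda>w. w powr (-\<beta> / 2) * besselI \<beta> (2 * sqrt w)) z = mu \<beta> j z / Gamma (\<beta> + 1)"
proof (induction j arbitrary: z)
  case 0
  then show ?case using psi_mu[OF b] by simp
next
  case (Suc j)
  let ?F = "(euler_op ^^ j) (\<lambda>w. w powr (-\<beta> / 2) * besselI \<beta> (2 * sqrt w))"
  have d: "((\<lambda>x. mu \<beta> j x / Gamma (\<beta> + 1)) has_real_derivative (mu \<beta> (Suc j) z / z) / Gamma (\<beta> + 1)) (at z)"
    by (intro DERIV_cdivide mu_deriv[OF b Suc.prems])
  have "(?F has_real_derivative (mu \<beta> (Suc j) z / z) / Gamma (\<beta> + 1)) (at z)"
    by (rule has_field_derivative_transform_within_open[OF d, of "{0<..}"]) (use Suc in auto)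
  hence "deriv ?F z = (mu \<beta> (Suc j) z / z) / Gamma (\<beta> + 1)" by (rule DERIV_imp_deriv)
  moreover have "(euler_op ^^ Suc j) (\<lambda>w. w powr (-\<beta> / 2) * besselI \<beta> (2 * sqrt w)) z = z * deriv ?F z"
    by (simp only: funpow.simps comp_apply euler_op_def[of ?F])
  ultimately show ?case using Suc.prems by simp
qed

lemma euler_mu':
  assumes b: "\<beta> > -1" and z: "z > 0"
  shows "(euler_op ^^ j) (\<lambda>w. w powr (-(\<beta> / 2)) * besselI \<beta> (2 * sqrt w)) z = mu \<beta> j z / Gamma (\<beta> + 1)"
  using euler_mu[OF b z, of j] by simp

lemma Delta_det:
  assumes b: "\<beta> > -1" and z: "z > 0"
  shows "Delta n \<beta> z = det (mat n n (\<lambda>(i,j). mu \<beta> (i+j) z))"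
proof -
  let ?G = "Gamma (\<beta> + 1)"
  have G: "?G > 0" using b by simp
  have "mat n n (\<lambda>(j, k). (euler_op ^^ (j + k)) (\<lambda>w. w powr (-\<beta> / 2) * besselI \<beta> (2 * sqrt w)) z)
      = (1 / ?G) \<cdot>\<^sub>m mat n n (\<lambda>(i,j). mu \<beta> (i+j) z)"
    by (rule eq_matI) (auto simp: euler_mu[OF b z] euler_mu'[OF b z])
  hence "Wdet n (\<lambda>w. w powr (-\<beta> / 2) * besselI \<beta> (2 * sqrt w)) z
      = (1 / ?G) ^ n * det (mat n n (\<lambda>(i,j). mu \<beta> (i+j) z))"
    unfolding Wdet_def by simp
  thus ?thesis unfolding Delta_def using G by (simp add: power_one_over)
qed



definition ipk :: "real \<Rightarrow> nat \<Rightarrow> real \<Rightarrow> real poly \<Rightarrow> real poly \<Rightarrow> real" where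
  "ipk \<beta> s z q r = (\<Sum>k. charlier_weight \<beta> z k * real k ^ s * poly q (real k) * poly r (real k))"

definition msum :: "real \<Rightarrow> nat \<Rightarrow> real \<Rightarrow> nat \<Rightarrow> real poly \<Rightarrow> real poly \<Rightarrow> real" where
  "msum \<beta> s z N q r = (\<Sum>i<N. \<Sum>j<N. coeff q i * coeff r j * mu \<beta> (i + j + s) z)"

lemma poly_N: "degree (q::real poly) < N \<Longrightarrow> poly q x = (\<Sum>i<N. coeff q i * x ^ i)"
  unfolding poly_altdef
  by (rule sum.mono_neutral_left) (auto simp: coeff_eq_0)

lemma ipk_sums:
  assumes b: "\<beta> > -1" and q: "degree q < N" and r: "degree r < N"
  shows "(\<lambda>k. charlier_weight \<beta> z k * real k ^ s * poly q (real k) * poly r (real k)) sums msum \<beta> s z N q r"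
proof -
  have eq: "charlier_weight \<beta> z k * real k ^ s * poly q (real k) * poly r (real k)
     = (\<Sum>i<N. \<Sum>j<N. coeff q i * coeff r j * ((real k ^ (i + j + s) * cw \<beta> k) * z ^ k))" for k
  proof -
    have "charlier_weight \<beta> z k * real k ^ s * poly q (real k) * poly r (real k)
       = (cw \<beta> k * z ^ k * real k ^ s) * ((\<Sum>i<N. coeff q i * real k ^ i) * (\<Sum>j<N. coeff r j * real k ^ j))"
      unfolding charlier_weight_cw poly_N[OF q] poly_N[OF r] by (simp add: mult_ac)
    also have "\<dots> = (\<Sum>i<N. \<Sum>j<N. (cw \<beta> k * z ^ k * real k ^ s) * (coeff q i * real k ^ i * (coeff r j * real k ^ j)))"
      by (subst sum_product) (simp add: sum_distrib_left)
    also have "\<dots> = (\<Sum>i<N. \<Sum>j<N. coeff q i * coeff r j * ((real k ^ (i + j + s) * cw \<beta> k) * z ^ k))"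
      by (intro sum.cong refl) (simp add: power_add mult_ac)
    finally show ?thesis .
  qed
  show ?thesis unfolding eq msum_def
    by (intro sums_sum sums_mult mu_sums[OF b])
qed

lemma ipk_eq: "\<beta> > -1 \<Longrightarrow> degree q < N \<Longrightarrow> degree r < N \<Longrightarrow> ipk \<beta> s z q r = msum \<beta> s z N q r"
  unfolding ipk_def by (rule sums_unique[symmetric], rule ipk_sums)

lemma ipk_summable: "\<beta> > -1 \<Longrightarrow> summable (\<lambda>k. charlier_weight \<beta> z k * real k ^ s * poly q (real k) * poly r (real k))"
  using ipk_sums[of \<beta> q "Suc (max (degree q) (degree r))" r z s] sums_summable by force

lemma ipk_add: "\<beta> > -1 \<Longrightarrow> ipk \<beta> s z (q1 + q2) r = ipk \<beta> s z q1 r + ipk \<beta> s z q2 r"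
  unfolding ipk_def
  by (subst suminf_add[OF ipk_summable ipk_summable]; simp add: algebra_simps)

lemma ipk_diff: "\<beta> > -1 \<Longrightarrow> ipk \<beta> s z (q1 - q2) r = ipk \<beta> s z q1 r - ipk \<beta> s z q2 r"
  unfolding ipk_def
  by (subst suminf_diff[OF ipk_summable ipk_summable]; simp add: algebra_simps)

lemma ipk_smult: "\<beta> > -1 \<Longrightarrow> ipk \<beta> s z (Polynomial.smult c q) r = c * ipk \<beta> s z q r"
  unfolding ipk_def
  by (subst suminf_mult[OF ipk_summable, symmetric]; simp add: algebra_simps)

lemma ipk_sym: "ipk \<beta> s z q r = ipk \<beta> s z r q"
  unfolding ipk_def by (simp add: mult_ac)

lemma ipk_zero[simp]: "ipk \<beta> s z 0 r = 0"
  unfolding ipk_def by simp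

lemma ipk_x: "ipk \<beta> 1 z q r = ipk \<beta> 0 z ([:0, 1:] * q) r"
  unfolding ipk_def by (simp add: mult_ac)

lemma prod_differentiable:
  fixes f :: "'i \<Rightarrow> real \<Rightarrow> real"
  assumes "\<And>i. i \<in> I \<Longrightarrow> f i differentiable (at x)"
  shows "(\<lambda>x. \<Prod>i\<in>I. f i x) differentiable (at x)"
proof -
  from assms obtain f' where "\<And>i. i \<in> I \<Longrightarrow> (f i has_derivative f' i) (at x)"
    unfolding differentiable_def by metis
  hence "((\<lambda>x. \<Prod>i\<in>I. f i x) has_derivative (\<lambda>y. \<Sum>i\<in>I. f' i y * (\<Prod>j\<in>I - {i}. f j x))) (at x)"
    by (rule has_derivative_prod)
  thus ?thesis unfolding differentiable_def by blast
qed

lemma det_mat_differentiable: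
  fixes f :: "nat \<Rightarrow> nat \<Rightarrow> real \<Rightarrow> real"
  assumes "\<And>i j. i < n \<Longrightarrow> j < n \<Longrightarrow> f i j differentiable (at x)"
  shows "(\<lambda>z. det (mat n n (\<lambda>(i,j). f i j z))) differentiable (at x)"
proof -
  have eq: "det (mat n n (\<lambda>(i,j). f i j z)) = (\<Sum>p\<in>{p. p permutes {0..<n}}. signof p * (\<Prod>i=0..<n. f i (p i) z))" for z
  proof -
    have "det (mat n n (\<lambda>(i,j). f i j z)) = (\<Sum>p\<in>{p. p permutes {0..<n}}. signof p * (\<Prod>i=0..<n. mat n n (\<lambda>(i,j). f i j z) $$ (i, p i)))"
      by (rule det_def') simp
    also have "\<dots> = (\<Sum>p\<in>{p. p permutes {0..<n}}. signof p * (\<Prod>i=0..<n. f i (p i) z))"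
      by (intro sum.cong refl arg_cong2[where f = "(*)"] prod.cong) (auto simp: permutes_in_image)
    finally show ?thesis .
  qed
  show ?thesis unfolding eq
  proof (intro differentiable_sum ballI differentiable_mult prod_differentiable)
    fix p i assume "p \<in> {p. p permutes {0..<n}}" "i \<in> {0..<n}"
    thus "f i (p i) differentiable (at x)" by (intro assms) (auto simp: permutes_in_image)
  qed (auto simp: finite_permutations)
qed



locale charl =
  fixes \<beta> :: real
    and p :: "real \<Rightarrow> nat \<Rightarrow> real poly"
    and a b :: "real \<Rightarrow> nat \<Rightarrow> real"
  assumes beta: "\<beta> > -1"
    and deg: "\<And>z n. z > 0 \<Longrightarrow> degree (p z n) = n"
    and lead: "\<And>z n. z > 0 \<Longrightarrow> lead_coeff (p z n) > 0"
    and orth: "\<And>z m n. z > 0 \<Longrightarrow>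
       (\<lambda>k. charlier_weight \<beta> z k * poly (p z m) (real k) * poly (p z n) (real k))
         sums (if m = n then 1 else 0)"
    and rec0: "\<And>z. z > 0 \<Longrightarrow>
       [:0, 1:] * p z 0 = Polynomial.smult (a z 1) (p z 1) + Polynomial.smult (b z 0) (p z 0)"
    and rec: "\<And>z n. z > 0 \<Longrightarrow> n \<ge> 1 \<Longrightarrow>
       [:0, 1:] * p z n = Polynomial.smult (a z (n + 1)) (p z (n + 1)) + Polynomial.smult (b z n) (p z n)
                          + Polynomial.smult (a z n) (p z (n - 1))"
begin

definition lc where "lc n z = lead_coeff (p z n)"
definition pm where "pm n z = Polynomial.smult (1 / lc n z) (p z n)"
definition g where "g n z i = coeff (pm n z) i"
definition hh where "hh n z = 1 / (lc n z)^2"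
abbreviation ip where "ip z q r \<equiv> ipk \<beta> 0 z q r"

lemma lc_pos: "z > 0 \<Longrightarrow> lc n z > 0" unfolding lc_def by (rule lead)

lemma lc_coeff: "z > 0 \<Longrightarrow> coeff (p z n) n = lc n z"
  unfolding lc_def using deg by simp

lemma coeff_p_0: "z > 0 \<Longrightarrow> i > n \<Longrightarrow> coeff (p z n) i = 0"
  using deg by (simp add: coeff_eq_0)

lemma hh_pos: "z > 0 \<Longrightarrow> hh n z > 0" unfolding hh_def using lc_pos[of z n] by simp

lemma ip_orth: "z > 0 \<Longrightarrow> ip z (p z m) (p z n) = (if m = n then 1 else 0)"
  unfolding ipk_def using orth[of z m n] by (simp add: sums_iff)

lemma ip_perp_aux:
  assumes z: "z > 0"
  shows "m \<le> n \<Longrightarrow> (\<forall>i\<ge>m. coeff q i = 0) \<Longrightarrow> ip z q (p z n) = 0"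
proof (induction m arbitrary: q)
  case 0
  hence "q = 0" by (auto simp: poly_eq_iff)
  thus ?case by simp
next
  case (Suc m)
  define c where "c = coeff q m / lc m z"
  define q' where "q' = q - Polynomial.smult c (p z m)"
  have "\<forall>i\<ge>m. coeff q' i = 0"
  proof (intro allI impI)
    fix i assume "m \<le> i"
    show "coeff q' i = 0"
    proof (cases "i = m")
      case True thus ?thesis using lc_pos[OF z, of m] lc_coeff[OF z, of m] by (simp add: q'_def c_def)
    next
      case False thus ?thesis using Suc.prems \<open>m \<le> i\<close> coeff_p_0[OF z, of m i] by (simp add: q'_def)
    qed
  qed
  hence "ip z q' (p z n) = 0" using Suc by simp
  moreover have "q = q' + Polynomial.smult c (p z m)" by (simp add: q'_def)
  moreover have "ip z (p z m) (p z n) = 0" using ip_orth[OF z, of m n] Suc.prems by simp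
  ultimately show ?case using ipk_add[OF beta] ipk_smult[OF beta] by simp
qed

lemma ip_perp: "z > 0 \<Longrightarrow> (\<forall>i\<ge>n. coeff q i = 0) \<Longrightarrow> ip z q (p z n) = 0"
  using ip_perp_aux by blast

lemma pm_coeff_top: "z > 0 \<Longrightarrow> coeff (pm n z) n = 1"
  unfolding pm_def using lc_coeff[of z n] lc_pos[of z n] by (simp add: field_simps)

lemma pm_coeff_0: "z > 0 \<Longrightarrow> i > n \<Longrightarrow> coeff (pm n z) i = 0"
  unfolding pm_def using coeff_p_0 by simp

lemma pm_degree: "z > 0 \<Longrightarrow> degree (pm n z) = n"
  unfolding pm_def using deg[of z n] lc_pos[of z n] by (simp add: degree_smult_eq)

lemma ip_pm_pm: "z > 0 \<Longrightarrow> ip z (pm n z) (pm n z) = hh n z"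
  unfolding pm_def hh_def
  by (simp add: ipk_smult[OF beta] ipk_sym[of \<beta> 0 z _ "Polynomial.smult _ _"] ip_orth power2_eq_square)

lemma ip_perp_pm: "z > 0 \<Longrightarrow> (\<forall>i\<ge>n. coeff q i = 0) \<Longrightarrow> ip z q (pm n z) = 0"
proof -
  assume z: "z > 0" and q: "\<forall>i\<ge>n. coeff q i = 0"
  have "ip z q (pm n z) = ip z (pm n z) q" by (rule ipk_sym)
  also have "\<dots> = (1 / lc n z) * ip z (p z n) q" unfolding pm_def by (rule ipk_smult[OF beta])
  also have "ip z (p z n) q = ip z q (p z n)" by (rule ipk_sym)
  also have "\<dots> = 0" by (rule ip_perp[OF z q])
  finally show ?thesis by simp
qed

lemma ip_monom_pm: "z > 0 \<Longrightarrow> i < n \<Longrightarrow> ip z (monom 1 i) (pm n z) = 0"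
  by (rule ip_perp_pm) (auto simp: coeff_monom)

lemma ip_monom_pm_top: "z > 0 \<Longrightarrow> ip z (monom 1 n) (pm n z) = hh n z"
proof -
  assume z: "z > 0"
  have d: "\<forall>i\<ge>n. coeff (pm n z - monom 1 n) i = 0"
  proof (intro allI impI)
    fix i assume "n \<le> i"
    thus "coeff (pm n z - monom 1 n) i = 0"
      using pm_coeff_top[OF z, of n] pm_coeff_0[OF z, of n i] by (cases "i = n") (auto simp: coeff_monom)
  qed
  have "ip z (monom 1 n) (pm n z) = ip z (pm n z - (pm n z - monom 1 n)) (pm n z)" by simp
  also have "\<dots> = ip z (pm n z) (pm n z) - ip z (pm n z - monom 1 n) (pm n z)" by (rule ipk_diff[OF beta])
  also have "\<dots> = hh n z" using ip_perp_pm[OF z d] ip_pm_pm[OF z] by simp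
  finally show ?thesis .
qed

end


lemma ipk_smult2: "\<beta> > -1 \<Longrightarrow> ipk \<beta> s z q (Polynomial.smult c r) = c * ipk \<beta> s z q r"
  using ipk_smult[of \<beta> s z c r q] ipk_sym by metis

lemma ipk_add2: "\<beta> > -1 \<Longrightarrow> ipk \<beta> s z q (r1 + r2) = ipk \<beta> s z q r1 + ipk \<beta> s z q r2"
  using ipk_add[of \<beta> s z r1 r2 q] ipk_sym by metis


context charl
begin

lemma g_eq: "g n z i = coeff (p z n) i / lc n z"
  unfolding g_def pm_def by simp

lemma rec_coeff:
  assumes z: "z > 0" and n: "n \<ge> 1"
  shows "coeff (pCons 0 (p z n)) i = a z (n + 1) * coeff (p z (n + 1)) i + b z n * coeff (p z n) i
           + a z n * coeff (p z (n - 1)) i"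
  using arg_cong[OF rec[OF z n], of "\<lambda>q. coeff q i"] by simp

lemma rec0_coeff:
  assumes z: "z > 0"
  shows "coeff (pCons 0 (p z 0)) i = a z 1 * coeff (p z 1) i + b z 0 * coeff (p z 0) i"
  using arg_cong[OF rec0[OF z], of "\<lambda>q. coeff q i"] by simp

lemma lc_rec: "z > 0 \<Longrightarrow> lc n z = a z (Suc n) * lc (Suc n) z"
proof (cases "n = 0")
  case True
  assume z: "z > 0"
  have "coeff (pCons 0 (p z 0)) 1 = a z 1 * coeff (p z 1) 1 + b z 0 * coeff (p z 0) 1" by (rule rec0_coeff[OF z])
  thus ?thesis using True lc_coeff[OF z, of 0] lc_coeff[OF z, of 1] coeff_p_0[OF z, of 0 1] by simp
next
  case False
  assume z: "z > 0"
  hence "coeff (pCons 0 (p z n)) (Suc n) = a z (n + 1) * coeff (p z (n + 1)) (Suc n) + b z n * coeff (p z n) (Suc n)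
           + a z n * coeff (p z (n - 1)) (Suc n)" using False by (intro rec_coeff) auto
  thus ?thesis using lc_coeff[OF z, of n] lc_coeff[OF z, of "Suc n"] coeff_p_0[OF z, of n "Suc n"]
      coeff_p_0[OF z, of "n - 1" "Suc n"] False by simp
qed

lemma a_eq: "z > 0 \<Longrightarrow> n \<ge> 1 \<Longrightarrow> a z n = lc (n - 1) z / lc n z"
  using lc_rec[of z "n - 1"] lc_pos[of z n] by (simp add: field_simps)

lemma g_sum_b: "z > 0 \<Longrightarrow> g (Suc m) z m = - (\<Sum>i<Suc m. b z i)"
proof (induction m)
  case 0
  hence z: "z > 0" .
  have e: "coeff (pCons 0 (p z 0)) 0 = a z 1 * coeff (p z 1) 0 + b z 0 * coeff (p z 0) 0" by (rule rec0_coeff[OF z])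
  hence e2: "a z 1 * coeff (p z 1) 0 = - b z 0 * lc 0 z" using lc_coeff[OF z, of 0] by simp
  have l: "lc 0 z = a z 1 * lc 1 z" using lc_rec[OF z, of 0] by simp
  have p0: "lc 0 z > 0" "lc 1 z > 0" using lc_pos[OF z] by auto
  have a1: "a z 1 \<noteq> 0" using l p0 by auto
  have "g 1 z 0 = coeff (p z 1) 0 / lc 1 z" by (rule g_eq)
  also have "\<dots> = a z 1 * coeff (p z 1) 0 / lc 0 z" unfolding l using a1 by simp
  also have "\<dots> = - b z 0" unfolding e2 using p0 by simp
  finally show ?case by simp
next
  case (Suc m)
  hence z: "z > 0" by simp
  let ?A = "a z (Suc (Suc m))" and ?c2 = "coeff (p z (Suc (Suc m))) (Suc m)"
  have e: "coeff (pCons 0 (p z (Suc m))) (Suc m) = a z (Suc m + 1) * coeff (p z (Suc m + 1)) (Suc m) + b z (Suc m) * coeff (p z (Suc m)) (Suc m)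
           + a z (Suc m) * coeff (p z (Suc m - 1)) (Suc m)" by (rule rec_coeff[OF z]) simp
  have e': "coeff (p z m) (Suc m) = 0" using coeff_p_0[OF z] by simp
  have e2: "?A * ?c2 = coeff (p z (Suc m)) m - b z (Suc m) * lc (Suc m) z"
    using e e' lc_coeff[OF z, of "Suc m"] by simp
  have l: "lc (Suc m) z = ?A * lc (Suc (Suc m)) z" by (rule lc_rec[OF z])
  have p0: "lc (Suc m) z > 0" "lc (Suc (Suc m)) z > 0" using lc_pos[OF z] by auto
  have a1: "?A \<noteq> 0" using l p0 by auto
  have "g (Suc (Suc m)) z (Suc m) = ?c2 / lc (Suc (Suc m)) z" by (rule g_eq)
  also have "\<dots> = ?A * ?c2 / lc (Suc m) z" unfolding l using a1 by simp
  also have "\<dots> = coeff (p z (Suc m)) m / lc (Suc m) z - b z (Suc m)"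
    unfolding e2 using p0 by (simp add: diff_divide_distrib)
  also have "\<dots> = g (Suc m) z m - b z (Suc m)" by (simp add: g_eq)
  finally show ?case using Suc by simp
qed

lemma xp_ip:
  assumes z: "z > 0"
  shows "ip z ([:0,1:] * p z n) (p z m) = a z (n + 1) * (if n + 1 = m then 1 else 0) + b z n * (if n = m then 1 else 0)
     + (if n \<ge> 1 then a z n * (if n - 1 = m then 1 else 0) else 0)"
proof (cases "n \<ge> 1")
  case True
  show ?thesis unfolding rec[OF z True] using True
    by (simp add: ipk_add[OF beta] ipk_smult[OF beta] ip_orth[OF z])
next
  case False
  hence n0: "n = 0" by simp
  show ?thesis unfolding n0 rec0[OF z]
    by (simp add: ipk_add[OF beta] ipk_smult[OF beta] ip_orth[OF z])
qed

lemma ip1_pm: "z > 0 \<Longrightarrow> ipk \<beta> 1 z (pm n z) (pm n z) = b z n * hh n z"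
proof -
  assume z: "z > 0"
  have "ipk \<beta> 1 z (pm n z) (pm n z) = ip z ([:0,1:] * pm n z) (pm n z)" by (rule ipk_x)
  also have "\<dots> = (1 / lc n z) * (1 / lc n z) * ip z ([:0,1:] * p z n) (p z n)"
    unfolding pm_def mult_smult_right ipk_smult[OF beta] ipk_smult2[OF beta] by simp
  also have "\<dots> = b z n * hh n z" unfolding xp_ip[OF z] hh_def by (cases n) (simp_all add: power2_eq_square)
  finally show ?thesis .
qed

lemma ip1_pm2: "z > 0 \<Longrightarrow> n \<ge> 1 \<Longrightarrow> ipk \<beta> 1 z (pm n z) (pm (n - 1) z) = hh n z"
proof -
  assume z: "z > 0" and n: "n \<ge> 1"
  have "ipk \<beta> 1 z (pm n z) (pm (n - 1) z) = ipk \<beta> 1 z (pm (n - 1) z) (pm n z)" by (rule ipk_sym)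
  also have "\<dots> = ip z ([:0,1:] * pm (n - 1) z) (pm n z)" by (rule ipk_x)
  also have "\<dots> = (1 / lc (n - 1) z) * (1 / lc n z) * ip z ([:0,1:] * p z (n - 1)) (p z n)"
    unfolding pm_def mult_smult_right ipk_smult[OF beta] ipk_smult2[OF beta] by simp
  also have "ip z ([:0,1:] * p z (n - 1)) (p z n) = a z n"
  proof -
    have "n - 1 \<noteq> n" "n - 1 + 1 = n" "n \<noteq> n + 1" using n by auto
    thus ?thesis unfolding xp_ip[OF z] using n by simp
  qed
  also have "(1 / lc (n - 1) z) * (1 / lc n z) * a z n = hh n z"
    unfolding a_eq[OF z n] hh_def using lc_pos[OF z, of "n - 1"] lc_pos[OF z, of n]
    by (simp add: field_simps power2_eq_square)
  finally show ?thesis .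
qed

end


context charl
begin

lemma moment_det:
  assumes z: "z > 0"
  shows "det (mat n n (\<lambda>(i,j). mu \<beta> (i+j) z)) = (\<Prod>i<n. hh i z)"
proof -
  define P where "P = mat n n (\<lambda>(i,l). coeff (p z i) l)"
  define M where "M = mat n n (\<lambda>(i,j). mu \<beta> (i+j) z)"
  have P: "P \<in> carrier_mat n n" and M: "M \<in> carrier_mat n n" by (auto simp: P_def M_def)
  have eq: "P * M * transpose_mat P = 1\<^sub>m n"
  proof (rule eq_matI)
    fix m m' assume m: "m < dim_row (1\<^sub>m n :: real mat)" and m': "m' < dim_col (1\<^sub>m n :: real mat)"
    hence mn: "m < n" "m' < n" by auto
    have "(P * M * transpose_mat P) $$ (m, m') = (\<Sum>l<n. (\<Sum>i<n. coeff (p z m) i * mu \<beta> (i+l) z) * coeff (p z m') l)"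
      using mn by (simp add: P_def M_def scalar_prod_def atLeast0LessThan)
    also have "\<dots> = msum \<beta> 0 z n (p z m) (p z m')"
      unfolding msum_def by (subst sum.swap) (simp add: sum_distrib_right sum_distrib_left mult_ac)
    also have "\<dots> = ip z (p z m) (p z m')"
      by (rule ipk_eq[symmetric, OF beta]) (use mn deg[OF z] in auto)
    also have "\<dots> = (1\<^sub>m n :: real mat) $$ (m, m')" using ip_orth[OF z] mn by simp
    finally show "(P * M * transpose_mat P) $$ (m, m') = (1\<^sub>m n :: real mat) $$ (m, m')" .
  qed (auto simp: P_def M_def)
  have detP: "det P = (\<Prod>i<n. lc i z)"
  proof -
    have "det P = prod_list (diag_mat P)"
      by (rule det_lower_triangular[OF _ P]) (auto simp: P_def coeff_p_0[OF z])
    also have "\<dots> = (\<Prod>i<n. lc i z)" unfolding prod_list_diag_prod using P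
      by (auto simp: P_def lc_coeff[OF z] atLeast0LessThan intro!: prod.cong)
    finally show ?thesis .
  qed
  have "det (P * M * transpose_mat P) = det P * det M * det P"
    using P M by (simp add: det_mult[of _ n] det_transpose[OF P])
  hence "det P * det M * det P = 1" using eq by simp
  moreover have "(\<Prod>i<n. lc i z) \<noteq> 0" using lc_pos[OF z] by (simp add: prod_pos less_imp_neq[symmetric])
  ultimately have "det M = 1 / (\<Prod>i<n. lc i z) ^ 2" unfolding detP
    by (simp add: eq_divide_eq power2_eq_square mult_ac)
  also have "\<dots> = (\<Prod>i<n. hh i z)" unfolding hh_def by (simp add: prod_power_distrib prod_inversef[symmetric] divide_inverse)
  finally show ?thesis unfolding M_def .
qed

lemma Delta_prod: "z > 0 \<Longrightarrow> Delta n \<beta> z = (\<Prod>i<n. hh i z)"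
  using Delta_det[OF beta] moment_det by simp

lemma Delta_pos: "z > 0 \<Longrightarrow> Delta n \<beta> z > 0"
  unfolding Delta_prod by (intro prod_pos) (auto intro: hh_pos)

end


lemma msum_monom:
  assumes "i0 < N"
  shows "msum \<beta> s z N (monom 1 i0) r = (\<Sum>l<N. coeff r l * mu \<beta> (i0 + l + s) z)"
proof -
  have "msum \<beta> s z N (monom 1 i0) r = (\<Sum>i<N. if i = i0 then (\<Sum>l<N. coeff r l * mu \<beta> (i + l + s) z) else 0)"
    unfolding msum_def by (intro sum.cong refl) (auto simp: coeff_monom)
  also have "\<dots> = (\<Sum>l<N. coeff r l * mu \<beta> (i0 + l + s) z)" using assms by (simp add: sum.delta')
  finally show ?thesis .
qed

lemma mu_differentiable: "\<beta> > -1 \<Longrightarrow> z > 0 \<Longrightarrow> mu \<beta> j differentiable (at z)"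
  using mu_deriv real_differentiable_def by blast

context charl
begin

lemma g_linsys:
  assumes z: "z > 0" and j: "j < n"
  shows "(\<Sum>i<n. mu \<beta> (j + i) z * g n z i) = - mu \<beta> (j + n) z"
proof -
  have "0 = ip z (monom 1 j) (pm n z)" using ip_monom_pm[OF z j] by simp
  also have "\<dots> = msum \<beta> 0 z (Suc n) (monom 1 j) (pm n z)"
    by (rule ipk_eq[OF beta]) (use j pm_degree[OF z] in \<open>auto simp: degree_monom_eq\<close>)
  also have "\<dots> = (\<Sum>l<Suc n. g n z l * mu \<beta> (j + l) z)"
    using j by (simp add: msum_monom g_def)
  also have "\<dots> = (\<Sum>i<n. mu \<beta> (j + i) z * g n z i) + mu \<beta> (j + n) z"
    using pm_coeff_top[OF z, of n] by (simp add: g_def mult_ac)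
  finally show ?thesis by simp
qed

lemma g_cramer:
  assumes z: "z > 0" and k: "k < n"
  shows "g n z k = det (mat n n (\<lambda>(i,j). if j = k then - mu \<beta> (i+n) z else mu \<beta> (i+j) z)) / Delta n \<beta> z"
proof -
  define A where "A = mat n n (\<lambda>(i,j). mu \<beta> (i+j) z)"
  define x where "x = vec n (\<lambda>i. g n z i)"
  have A: "A \<in> carrier_mat n n" by (simp add: A_def)
  have xv: "x \<in> carrier_vec n" by (simp add: x_def)
  have Ax: "A *\<^sub>v x = vec n (\<lambda>j. - mu \<beta> (j + n) z)"
  proof (rule eq_vecI)
    fix j assume "j < dim_vec (vec n (\<lambda>j. - mu \<beta> (j + n) z))"
    hence j: "j < n" by simp
    show "(A *\<^sub>v x) $ j = vec n (\<lambda>j. - mu \<beta> (j + n) z) $ j"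
      using j g_linsys[OF z j] by (simp add: A_def x_def scalar_prod_def atLeast0LessThan)
  qed (simp add: A_def)
  have R: "replace_col A (A *\<^sub>v x) k = mat n n (\<lambda>(i,j). if j = k then - mu \<beta> (i+n) z else mu \<beta> (i+j) z)"
    unfolding Ax by (rule eq_matI) (auto simp: replace_col_def A_def)
  have "det (replace_col A (A *\<^sub>v x) k) = x $ k * det A" by (rule cramer_lemma_mat[OF A xv k])
  moreover have "det A = Delta n \<beta> z" unfolding A_def by (rule Delta_det[OF beta z, symmetric])
  moreover have "x $ k = g n z k" using k by (simp add: x_def)
  moreover have "Delta n \<beta> z > 0" by (rule Delta_pos[OF z])
  ultimately show ?thesis unfolding R by (simp add: field_simps)
qed

lemma g_deriv:
  assumes z0: "z0 > 0"
  shows "((\<lambda>z. g n z k) has_real_derivative deriv (\<lambda>z. g n z k) z0) (at z0)"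
proof (cases "k < n")
  case True
  define F where "F = (\<lambda>z. det (mat n n (\<lambda>(i,j). if j = k then - mu \<beta> (i+n) z else mu \<beta> (i+j) z))
                   / det (mat n n (\<lambda>(i,j). mu \<beta> (i+j) z)))"
  have "F differentiable (at z0)" unfolding F_def
  proof (intro differentiable_divide det_mat_differentiable)
    fix i j
    show "(\<lambda>z. if j = k then - mu \<beta> (i+n) z else mu \<beta> (i+j) z) differentiable (at z0)"
      by (cases "j = k") (auto intro!: differentiable_minus mu_differentiable[OF beta z0])
    show "mu \<beta> (i + j) differentiable (at z0)" by (rule mu_differentiable[OF beta z0])
  next
    show "det (mat n n (\<lambda>(i,j). mu \<beta> (i+j) z0)) \<noteq> 0"
      using Delta_pos[OF z0, of n] Delta_det[OF beta z0, of n] by simp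
  qed
  then obtain D where D: "(F has_real_derivative D) (at z0)" using real_differentiable_def by blast
  have "((\<lambda>z. g n z k) has_real_derivative D) (at z0)"
  proof (rule has_field_derivative_transform_within_open[OF D, of "{0<..}"])
    fix z :: real assume "z \<in> {0<..}"
    hence z: "z > 0" by simp
    show "F z = g n z k" unfolding F_def g_cramer[OF z True] Delta_det[OF beta z] ..
  qed (use z0 in auto)
  thus ?thesis using DERIV_imp_deriv by metis
next
  case False
  have D: "((\<lambda>z. if k = n then 1 else 0 :: real) has_real_derivative 0) (at z0)" by simp
  have "((\<lambda>z. g n z k) has_real_derivative 0) (at z0)"
  proof (rule has_field_derivative_transform_within_open[OF D, of "{0<..}"])
    fix z :: real assume "z \<in> {0<..}"
    hence z: "z > 0" by simp
    show "(if k = n then 1 else 0) = g n z k"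
      using False pm_coeff_top[OF z, of n] pm_coeff_0[OF z, of n k] by (auto simp: g_def)
  qed (use z0 in auto)
  thus ?thesis using DERIV_imp_deriv by metis
qed

lemma g_deriv_0: "z0 > 0 \<Longrightarrow> k \<ge> n \<Longrightarrow> deriv (\<lambda>z. g n z k) z0 = 0"
proof -
  assume z0: "z0 > 0" and k: "k \<ge> n"
  have D: "((\<lambda>z. if k = n then 1 else 0 :: real) has_real_derivative 0) (at z0)" by simp
  have "((\<lambda>z. g n z k) has_real_derivative 0) (at z0)"
  proof (rule has_field_derivative_transform_within_open[OF D, of "{0<..}"])
    fix z :: real assume "z \<in> {0<..}"
    hence z: "z > 0" by simp
    show "(if k = n then 1 else 0) = g n z k"
      using k pm_coeff_top[OF z, of n] pm_coeff_0[OF z, of n k] by (auto simp: g_def)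
  qed (use z0 in auto)
  thus ?thesis by (rule DERIV_imp_deriv)
qed

end


lemma msum_fun_deriv:
  fixes F G :: "nat \<Rightarrow> real \<Rightarrow> real"
  assumes b: "\<beta> > -1" and z0: "z0 > 0"
    and dF: "\<And>i. (F i has_real_derivative F' i) (at z0)"
    and dG: "\<And>j. (G j has_real_derivative G' j) (at z0)"
  shows "((\<lambda>z. \<Sum>i<N. \<Sum>j<N. F i z * G j z * mu \<beta> (i+j) z) has_real_derivative
     (\<Sum>i<N. \<Sum>j<N. F' i * G j z0 * mu \<beta> (i+j) z0 + F i z0 * G' j * mu \<beta> (i+j) z0
        + F i z0 * G j z0 * (mu \<beta> (Suc (i+j)) z0 / z0))) (at z0)"
proof (intro DERIV_sum)
  fix i j
  have "((\<lambda>z. F i z * G j z * mu \<beta> (i+j) z) has_real_derivative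
     (F' i * G j z0 + G' j * F i z0) * mu \<beta> (i+j) z0 + mu \<beta> (Suc (i+j)) z0 / z0 * (F i z0 * G j z0)) (at z0)"
    by (intro DERIV_mult dF dG mu_deriv[OF b z0])
  thus "((\<lambda>z. F i z * G j z * mu \<beta> (i+j) z) has_real_derivative
     F' i * G j z0 * mu \<beta> (i+j) z0 + F i z0 * G' j * mu \<beta> (i+j) z0
        + F i z0 * G j z0 * (mu \<beta> (Suc (i+j)) z0 / z0)) (at z0)"
    by (rule DERIV_cong) (simp add: algebra_simps)
qed

context charl
begin

lemma ip_monom_msum:
  assumes z: "z > 0" and i: "i < N" and d: "m < N"
  shows "ip z (monom 1 i) (pm m z) = (\<Sum>l<N. g m z l * mu \<beta> (i + l) z)"
proof -
  have "ip z (monom 1 i) (pm m z) = msum \<beta> 0 z N (monom 1 i) (pm m z)"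
    by (rule ipk_eq[OF beta]) (use i d pm_degree[OF z] in \<open>auto simp: degree_monom_eq\<close>)
  also have "\<dots> = (\<Sum>l<N. g m z l * mu \<beta> (i + l) z)"
    using i by (simp add: msum_monom g_def)
  finally show ?thesis .
qed

lemma ip_msum_g:
  assumes z: "z > 0" and m: "m < N" and m': "m' < N"
  shows "ipk \<beta> s z (pm m z) (pm m' z) = (\<Sum>i<N. \<Sum>j<N. g m z i * g m' z j * mu \<beta> (i + j + s) z)"
  unfolding ipk_eq[OF beta pm_degree[OF z, of m, THEN ssubst[where P = "\<lambda>x. x < N"], OF m]
    pm_degree[OF z, of m', THEN ssubst[where P = "\<lambda>x. x < N"], OF m']] msum_def g_def ..

lemma hh_deriv:
  assumes z0: "z0 > 0"
  shows "(hh n has_real_derivative b z0 n * hh n z0 / z0) (at z0)"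
proof -
  let ?N = "Suc n"
  let ?gd = "\<lambda>i. deriv (\<lambda>z. g n z i) z0"
  have D: "((\<lambda>z. \<Sum>i<?N. \<Sum>j<?N. g n z i * g n z j * mu \<beta> (i+j) z) has_real_derivative
     (\<Sum>i<?N. \<Sum>j<?N. ?gd i * g n z0 j * mu \<beta> (i+j) z0 + g n z0 i * ?gd j * mu \<beta> (i+j) z0
        + g n z0 i * g n z0 j * (mu \<beta> (Suc (i+j)) z0 / z0))) (at z0)"
    by (rule msum_fun_deriv[OF beta z0 g_deriv[OF z0] g_deriv[OF z0]])
  have inner: "(\<Sum>j<?N. g n z0 j * mu \<beta> (i + j) z0) = 0" if "i < n" for i
    using ip_monom_msum[OF z0, of i ?N n] ip_monom_pm[OF z0 that] that by simp
  have A: "(\<Sum>i<?N. \<Sum>j<?N. ?gd i * g n z0 j * mu \<beta> (i+j) z0) = 0"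
  proof (rule sum.neutral, rule ballI)
    fix i assume "i \<in> {..<?N}"
    show "(\<Sum>j<?N. ?gd i * g n z0 j * mu \<beta> (i+j) z0) = 0"
    proof (cases "i < n")
      case True
      have "(\<Sum>j<?N. ?gd i * g n z0 j * mu \<beta> (i+j) z0) = ?gd i * (\<Sum>j<?N. g n z0 j * mu \<beta> (i + j) z0)"
        by (subst sum_distrib_left) (intro sum.cong refl, simp add: mult_ac)
      thus ?thesis using inner[OF True] by simp
    next
      case False thus ?thesis using g_deriv_0[OF z0, of n i] by simp
    qed
  qed
  have B: "(\<Sum>i<?N. \<Sum>j<?N. g n z0 i * ?gd j * mu \<beta> (i+j) z0) = 0"
  proof -
    have "(\<Sum>i<?N. \<Sum>j<?N. g n z0 i * ?gd j * mu \<beta> (i+j) z0) = (\<Sum>j<?N. \<Sum>i<?N. ?gd j * g n z0 i * mu \<beta> (j+i) z0)"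
      by (subst sum.swap) (simp add: mult_ac add.commute)
    also have "\<dots> = 0" using A by simp
    finally show ?thesis .
  qed
  have C: "(\<Sum>i<?N. \<Sum>j<?N. g n z0 i * g n z0 j * (mu \<beta> (Suc (i+j)) z0 / z0)) = b z0 n * hh n z0 / z0"
  proof -
    have "(\<Sum>i<?N. \<Sum>j<?N. g n z0 i * g n z0 j * (mu \<beta> (Suc (i+j)) z0 / z0))
        = (\<Sum>i<?N. \<Sum>j<?N. g n z0 i * g n z0 j * mu \<beta> (i + j + 1) z0) / z0"
      unfolding sum_divide_distrib by simp
    also have "\<dots> = ipk \<beta> 1 z0 (pm n z0) (pm n z0) / z0" using ip_msum_g[OF z0, of n ?N n 1] by simp
    finally show ?thesis using ip1_pm[OF z0] by simp
  qed
  have "(\<Sum>i<?N. \<Sum>j<?N. ?gd i * g n z0 j * mu \<beta> (i+j) z0 + g n z0 i * ?gd j * mu \<beta> (i+j) z0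
        + g n z0 i * g n z0 j * (mu \<beta> (Suc (i+j)) z0 / z0)) = b z0 n * hh n z0 / z0"
    using A B C by (simp add: sum.distrib)
  with D have D': "((\<lambda>z. \<Sum>i<?N. \<Sum>j<?N. g n z i * g n z j * mu \<beta> (i+j) z) has_real_derivative
     b z0 n * hh n z0 / z0) (at z0)" by simp
  show ?thesis
  proof (rule has_field_derivative_transform_within_open[OF D', of "{0<..}"])
    fix z :: real assume "z \<in> {0<..}"
    hence z: "z > 0" by simp
    show "(\<Sum>i<?N. \<Sum>j<?N. g n z i * g n z j * mu \<beta> (i+j) z) = hh n z"
      using ip_msum_g[OF z, of n ?N n 0] ip_pm_pm[OF z] by simp
  qed (use z0 in auto)
qed

end


context charl
begin

lemma g_top_deriv:
  assumes z0: "z0 > 0" and n: "n \<ge> 1"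
  shows "deriv (\<lambda>z. g n z (n - 1)) z0 * hh (n - 1) z0 + hh n z0 / z0 = 0"
proof -
  let ?N = "Suc n"
  let ?gd = "\<lambda>i. deriv (\<lambda>z. g n z i) z0"
  let ?hd = "\<lambda>j. deriv (\<lambda>z. g (n - 1) z j) z0"
  have D: "((\<lambda>z. \<Sum>i<?N. \<Sum>j<?N. g n z i * g (n - 1) z j * mu \<beta> (i+j) z) has_real_derivative
     (\<Sum>i<?N. \<Sum>j<?N. ?gd i * g (n - 1) z0 j * mu \<beta> (i+j) z0 + g n z0 i * ?hd j * mu \<beta> (i+j) z0
        + g n z0 i * g (n - 1) z0 j * (mu \<beta> (Suc (i+j)) z0 / z0))) (at z0)"
    by (rule msum_fun_deriv[OF beta z0 g_deriv[OF z0] g_deriv[OF z0]])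
  have D0: "((\<lambda>z. 0::real) has_real_derivative 0) (at z0)" by simp
  have D0': "((\<lambda>z. \<Sum>i<?N. \<Sum>j<?N. g n z i * g (n - 1) z j * mu \<beta> (i+j) z) has_real_derivative 0) (at z0)"
  proof (rule has_field_derivative_transform_within_open[OF D0, of "{0<..}"])
    fix z :: real assume "z \<in> {0<..}"
    hence z: "z > 0" by simp
    have "ipk \<beta> 0 z (pm n z) (pm (n - 1) z) = ip z (pm (n - 1) z) (pm n z)" by (rule ipk_sym)
    also have "\<dots> = 0" by (rule ip_perp_pm[OF z]) (use pm_coeff_0[OF z, of "n - 1"] n in auto)
    finally show "0 = (\<Sum>i<?N. \<Sum>j<?N. g n z i * g (n - 1) z j * mu \<beta> (i+j) z)"
      using ip_msum_g[OF z, of n ?N "n - 1" 0] by simp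
  qed (use z0 in auto)
  have A: "(\<Sum>i<?N. \<Sum>j<?N. ?gd i * g (n - 1) z0 j * mu \<beta> (i+j) z0) = ?gd (n - 1) * hh (n - 1) z0"
  proof -
    have "(\<Sum>i<?N. \<Sum>j<?N. ?gd i * g (n - 1) z0 j * mu \<beta> (i+j) z0)
        = (\<Sum>i<?N. if i = n - 1 then ?gd (n - 1) * hh (n - 1) z0 else 0)"
    proof (rule sum.cong[OF refl])
      fix i assume i: "i \<in> {..<?N}"
      have "(\<Sum>j<?N. ?gd i * g (n - 1) z0 j * mu \<beta> (i+j) z0) = ?gd i * ip z0 (monom 1 i) (pm (n - 1) z0)"
      proof -
        have eqip: "ip z0 (monom 1 i) (pm (n - 1) z0) = (\<Sum>l<?N. g (n - 1) z0 l * mu \<beta> (i + l) z0)"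
          by (rule ip_monom_msum[OF z0]) (use i in auto)
        show ?thesis unfolding eqip by (subst sum_distrib_left) (auto intro!: sum.cong simp: mult_ac)
      qed
      also have "\<dots> = (if i = n - 1 then ?gd (n - 1) * hh (n - 1) z0 else 0)"
      proof (cases "i < n - 1")
        case True thus ?thesis using ip_monom_pm[OF z0 True] by simp
      next
        case False
        show ?thesis
        proof (cases "i = n - 1")
          case True thus ?thesis using ip_monom_pm_top[OF z0, of "n - 1"] by simp
        next
          case False2: False
          hence "i \<ge> n" using False by simp
          thus ?thesis using g_deriv_0[OF z0, of n i] False2 by simp
        qed
      qed
      finally show "(\<Sum>j<?N. ?gd i * g (n - 1) z0 j * mu \<beta> (i+j) z0) = (if i = n - 1 then ?gd (n - 1) * hh (n - 1) z0 else 0)" .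
    qed
    also have "\<dots> = ?gd (n - 1) * hh (n - 1) z0" by (simp add: sum.delta')
    finally show ?thesis .
  qed
  have B: "(\<Sum>i<?N. \<Sum>j<?N. g n z0 i * ?hd j * mu \<beta> (i+j) z0) = 0"
  proof -
    have "(\<Sum>i<?N. \<Sum>j<?N. g n z0 i * ?hd j * mu \<beta> (i+j) z0) = (\<Sum>j<?N. ?hd j * (\<Sum>i<?N. g n z0 i * mu \<beta> (j+i) z0))"
      by (subst sum.swap) (rule sum.cong[OF refl], simp add: sum_distrib_left mult_ac add.commute del: sum.lessThan_Suc)
    also have "\<dots> = 0"
    proof (rule sum.neutral, rule ballI)
      fix j assume "j \<in> {..<?N}"
      show "?hd j * (\<Sum>i<?N. g n z0 i * mu \<beta> (j+i) z0) = 0"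
      proof (cases "j < n")
        case True thus ?thesis using ip_monom_msum[OF z0, of j ?N n] ip_monom_pm[OF z0 True] by simp
      next
        case False thus ?thesis using g_deriv_0[OF z0, of "n - 1" j] by simp
      qed
    qed
    finally show ?thesis .
  qed
  have C: "(\<Sum>i<?N. \<Sum>j<?N. g n z0 i * g (n - 1) z0 j * (mu \<beta> (Suc (i+j)) z0 / z0)) = hh n z0 / z0"
  proof -
    have "(\<Sum>i<?N. \<Sum>j<?N. g n z0 i * g (n - 1) z0 j * (mu \<beta> (Suc (i+j)) z0 / z0))
        = (\<Sum>i<?N. \<Sum>j<?N. g n z0 i * g (n - 1) z0 j * mu \<beta> (i + j + 1) z0) / z0"
      unfolding sum_divide_distrib by simp
    also have "\<dots> = ipk \<beta> 1 z0 (pm n z0) (pm (n - 1) z0) / z0" using ip_msum_g[OF z0, of n ?N "n - 1" 1] by simp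
    finally show ?thesis using ip1_pm2[OF z0 n] by simp
  qed
  have "(\<Sum>i<?N. \<Sum>j<?N. ?gd i * g (n - 1) z0 j * mu \<beta> (i+j) z0 + g n z0 i * ?hd j * mu \<beta> (i+j) z0
        + g n z0 i * g (n - 1) z0 j * (mu \<beta> (Suc (i+j)) z0 / z0)) = 0"
    using DERIV_unique[OF D D0'] .
  thus ?thesis using A B C by (simp add: sum.distrib)
qed

lemma Delta_ratio: "z > 0 \<Longrightarrow> Delta (n + 1) \<beta> z / Delta n \<beta> z = hh n z"
  unfolding Delta_prod using hh_pos[of z] by (simp add: prod_pos less_imp_neq[symmetric])

lemma b_main:
  assumes z0: "z0 > 0"
  shows "b z0 n = euler_op (\<lambda>z. ln (Delta (n + 1) \<beta> z / Delta n \<beta> z)) z0"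
proof -
  have D: "((\<lambda>z. ln (hh n z)) has_real_derivative (1 / hh n z0) * (b z0 n * hh n z0 / z0)) (at z0)"
    by (rule DERIV_chain2[OF DERIV_ln_divide[OF hh_pos[OF z0]] hh_deriv[OF z0]])
  have "((\<lambda>z. ln (Delta (n + 1) \<beta> z / Delta n \<beta> z)) has_real_derivative (1 / hh n z0) * (b z0 n * hh n z0 / z0)) (at z0)"
    by (rule has_field_derivative_transform_within_open[OF D, of "{0<..}"]) (use z0 Delta_ratio in auto)
  hence "deriv (\<lambda>z. ln (Delta (n + 1) \<beta> z / Delta n \<beta> z)) z0 = (1 / hh n z0) * (b z0 n * hh n z0 / z0)"
    by (rule DERIV_imp_deriv)
  thus ?thesis unfolding euler_op_def using z0 hh_pos[OF z0, of n] by simp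
qed

lemma euler_lnDelta:
  assumes z0: "z0 > 0"
  shows "euler_op (\<lambda>z. ln (Delta n \<beta> z)) z0 = (\<Sum>i<n. b z0 i)"
proof -
  have D: "((\<lambda>z. \<Sum>i<n. ln (hh i z)) has_real_derivative (\<Sum>i<n. (1 / hh i z0) * (b z0 i * hh i z0 / z0))) (at z0)"
    by (intro DERIV_sum DERIV_chain2[OF DERIV_ln_divide[OF hh_pos[OF z0]] hh_deriv[OF z0]])
  have "((\<lambda>z. ln (Delta n \<beta> z)) has_real_derivative (\<Sum>i<n. (1 / hh i z0) * (b z0 i * hh i z0 / z0))) (at z0)"
  proof (rule has_field_derivative_transform_within_open[OF D, of "{0<..}"])
    fix z :: real assume "z \<in> {0<..}"
    hence z: "z > 0" by simp
    show "(\<Sum>i<n. ln (hh i z)) = ln (Delta n \<beta> z)"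
      unfolding Delta_prod[OF z] using hh_pos[OF z] by (subst ln_prod) (auto simp: less_imp_neq[symmetric])
  qed (use z0 in auto)
  hence "deriv (\<lambda>z. ln (Delta n \<beta> z)) z0 = (\<Sum>i<n. (1 / hh i z0) * (b z0 i * hh i z0 / z0))"
    by (rule DERIV_imp_deriv)
  also have "\<dots> = (\<Sum>i<n. b z0 i) / z0"
    unfolding sum_divide_distrib using hh_pos[OF z0] by (intro sum.cong refl) (simp add: less_imp_neq[symmetric])
  finally show ?thesis unfolding euler_op_def using z0 by simp
qed

lemma a_main:
  assumes z0: "z0 > 0" and n: "n \<ge> 1"
  shows "(a z0 n)\<^sup>2 = (euler_op ^^ 2) (\<lambda>z. ln (Delta n \<beta> z)) z0"
proof -
  let ?E = "euler_op (\<lambda>z. ln (Delta n \<beta> z))"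
  let ?gd = "deriv (\<lambda>z. g n z (n - 1)) z0"
  have D: "((\<lambda>z. - g n z (n - 1)) has_real_derivative - ?gd) (at z0)"
    by (intro DERIV_minus g_deriv[OF z0])
  have "(?E has_real_derivative - ?gd) (at z0)"
  proof (rule has_field_derivative_transform_within_open[OF D, of "{0<..}"])
    fix z :: real assume "z \<in> {0<..}"
    hence z: "z > 0" by simp
    have "g (Suc (n - 1)) z (n - 1) = - (\<Sum>i<Suc (n - 1). b z i)" by (rule g_sum_b[OF z])
    thus "- g n z (n - 1) = ?E z" using n euler_lnDelta[OF z, of n] by simp
  qed (use z0 in auto)
  hence dE: "deriv ?E z0 = - ?gd" by (rule DERIV_imp_deriv)
  have "(euler_op ^^ 2) (\<lambda>z. ln (Delta n \<beta> z)) z0 = z0 * deriv ?E z0"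
    by (simp only: numeral_2_eq_2 funpow.simps comp_apply id_apply euler_op_def[of ?E])
  also have "\<dots> = hh n z0 / hh (n - 1) z0"
    using g_top_deriv[OF z0 n] hh_pos[OF z0, of "n - 1"] z0 unfolding dE
    by (simp add: field_simps)
  also have "\<dots> = (a z0 n)\<^sup>2"
    unfolding a_eq[OF z0 n] hh_def using lc_pos[OF z0, of n] lc_pos[OF z0, of "n - 1"]
    by (simp add: field_simps power2_eq_square)
  finally show ?thesis ..
qed

end

theorem corollary4p3:
  fixes \<beta> z0 :: real
    and p :: "real \<Rightarrow> nat \<Rightarrow> real poly"
    and a b :: "real \<Rightarrow> nat \<Rightarrow> real"
  assumes beta: "\<beta> > -1"
    and z0: "z0 > 0"
    and deg: "\<And>z n. z > 0 \<Longrightarrow> degree (p z n) = n"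
    and lead: "\<And>z n. z > 0 \<Longrightarrow> lead_coeff (p z n) > 0"
    and orth: "\<And>z m n. z > 0 \<Longrightarrow>
       (\<lambda>k. charlier_weight \<beta> z k * poly (p z m) (real k) * poly (p z n) (real k))
         sums (if m = n then 1 else 0)"
    and rec0: "\<And>z. z > 0 \<Longrightarrow>
       [:0, 1:] * p z 0 = Polynomial.smult (a z 1) (p z 1) + Polynomial.smult (b z 0) (p z 0)"
    and rec: "\<And>z n. z > 0 \<Longrightarrow> n \<ge> 1 \<Longrightarrow>
       [:0, 1:] * p z n = Polynomial.smult (a z (n + 1)) (p z (n + 1)) + Polynomial.smult (b z n) (p z n)
                          + Polynomial.smult (a z n) (p z (n - 1))"
  shows "(\<forall>n\<ge>1. (a z0 n)\<^sup>2 = (euler_op ^^ 2) (\<lambda>z. ln (Delta n \<beta> z)) z0)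
       \<and> (\<forall>n. b z0 n = euler_op (\<lambda>z. ln (Delta (n + 1) \<beta> z / Delta n \<beta> z)) z0)"
proof -
  interpret charl \<beta> p a b
    by unfold_locales (use beta deg lead orth rec0 rec in auto)
  show ?thesis using a_main[OF z0] b_main[OF z0] by auto
qed

end
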